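(* Let $S$ be a connected compact surface (closed, or with boundary) with a simplicial triangulation $T$ (so any two vertices span at most one edge), and let $\mathbf{d}_1,\mathbf{d}_2$ be two Euclidean polyhedral metrics on $(S,T)$, i.e. $(S,T,\mathbf{d}_1)$ and $(S,T,\mathbf{d}_2)$ are Euclidean polyhedral surfaces. Let $L_1,L_2$ be their discrete Laplace matrices. Then $L_1=L_2$ if and only if there is a constant $c>0$ with $\mathbf{d}_2=c\,\mathbf{d}_1$ (i.e. every edge length is multiplied by the same factor $c$).
   Context: An Euclidean polyhedral surface is a triple $(S,T,\mathbf{d})$ where $S$ is a surface, $T$ a triangulation of $S$ with vertices $v_1,\dots,v_N$, edges $e_1,\dots,e_m$ and faces $F$, and $\mathbf{d}$ is a metric on $S$ whose restriction to each triangle is isometric to a Euclidean triangle; equivalently $\mathbf{d}$ is given by edge lengths $d_k=d(e_k)>0$ satisfying the strict triangle inequalities on every face. Cotangent edge weight: if $[v_i,v_j]$ is a boundary edge lying in the single triangle $[v_i,v_j,v_k]$ and $\alpha$ is the angle at $v_k$, then $w_{ij}=\tfrac12\cot\alpha$; if $[v_i,v_j]$ is an interior edge and $\alpha,\beta$ are the two angles opposite to it in the two adjacent triangles, then $w_{ij}=\tfrac12(\cot\alpha+\cot\beta)$; $w_{ij}=0$ if $v_i,v_j$ are not joined by an edge. The discrete Laplace matrix $L=(L_{ij})$ is the $N\times N$ matrix with $L_{ij}=-w_{ij}$ for $i\neq j$ and $L_{ii}=\sum_k w_{ik}$. *)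

theory Defs
  imports Complex_Main
begin

text \<open>A finite simplicial 2-complex given by its vertex set V and its set of
triangles F (each a 3-element vertex set). Edges are the 2-element subsets of triangles.\<close>

definition edges :: "'a set set \<Rightarrow> 'a set set" where
  "edges F = {e. card e = 2 \<and> (\<exists>f\<in>F. e \<subseteq> f)}"

definition link_edges :: "'a set set \<Rightarrow> 'a \<Rightarrow> 'a set set" where
  "link_edges F v = {f - {v} | f. f \<in> F \<and> v \<in> f}"

definition link_vertices :: "'a set set \<Rightarrow> 'a \<Rightarrow> 'a set" where
  "link_vertices F v = \<Union>(link_edges F v)"

text \<open>Simplicial triangulation of a connected compact surface (possibly with boundary):
finite, pure 2-dimensional, every edge lies in one (boundary) or two (interior) triangles,
every vertex link is connected (hence a path or a cycle), and the 1-skeleton is connected.\<close>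

definition surface_triangulation :: "'a set \<Rightarrow> 'a set set \<Rightarrow> bool" where
  "surface_triangulation V F \<longleftrightarrow>
     finite V \<and> F \<noteq> {} \<and> (\<forall>f\<in>F. card f = 3 \<and> f \<subseteq> V) \<and> V = \<Union>F \<and>
     (\<forall>e\<in>edges F. card {f\<in>F. e \<subseteq> f} \<le> 2) \<and>
     (\<forall>v\<in>V. \<forall>u\<in>link_vertices F v. \<forall>w\<in>link_vertices F v.
        (u, w) \<in> {(x, y). {x, y} \<in> link_edges F v}\<^sup>*) \<and>
     (\<forall>u\<in>V. \<forall>w\<in>V. (u, w) \<in> {(x, y). {x, y} \<in> edges F}\<^sup>*)"

definition euclidean_metric :: "'a set set \<Rightarrow> ('a set \<Rightarrow> real) \<Rightarrow> bool" where
  "euclidean_metric F d \<longleftrightarrow>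
     (\<forall>e\<in>edges F. d e > 0) \<and>
     (\<forall>f\<in>F. \<forall>i\<in>f. \<forall>j\<in>f. \<forall>k\<in>f. i \<noteq> j \<and> j \<noteq> k \<and> i \<noteq> k \<longrightarrow>
        d {i, j} < d {i, k} + d {k, j})"

text \<open>Angle at vertex k in the triangle {i,j,k} (law of cosines).\<close>

definition tri_angle :: "('a set \<Rightarrow> real) \<Rightarrow> 'a \<Rightarrow> 'a \<Rightarrow> 'a \<Rightarrow> real" where
  "tri_angle d i j k =
     arccos (((d {k, i})^2 + (d {k, j})^2 - (d {i, j})^2) / (2 * d {k, i} * d {k, j}))"

definition cot_weight :: "'a set set \<Rightarrow> ('a set \<Rightarrow> real) \<Rightarrow> 'a \<Rightarrow> 'a \<Rightarrow> real" where
  "cot_weight F d i j =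
     (if {i, j} \<in> edges F
      then (\<Sum>f\<in>{f\<in>F. {i, j} \<subseteq> f}. cot (tri_angle d i j (the_elem (f - {i, j})))) / 2
      else 0)"

definition laplace :: "'a set \<Rightarrow> 'a set set \<Rightarrow> ('a set \<Rightarrow> real) \<Rightarrow> 'a \<Rightarrow> 'a \<Rightarrow> real" where
  "laplace V F d i j =
     (if i = j then (\<Sum>k\<in>V - {i}. cot_weight F d i k) else - cot_weight F d i j)"

end

theory Submission
  imports Defs
begin


definition Hs :: "real \<Rightarrow> real \<Rightarrow> real \<Rightarrow> real" where
  "Hs p q r = 2*p*q + 2*q*r + 2*r*p - p^2 - q^2 - r^2"

definition phi :: "real \<Rightarrow> real \<Rightarrow> real \<Rightarrow> real \<Rightarrow> real \<Rightarrow> real \<Rightarrow> real" where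
  "phi p1 p2 p3 q1 q2 q3 = (p2+p3-p1)*q1 + (p1+p3-p2)*q2 + (p1+p2-p3)*q3"

lemma phi_alt: "phi p1 p2 p3 q1 q2 q3 = (p1+p2+p3)*(q1+q2+q3) - 2*(p1*q1+p2*q2+p3*q3)"
  unfolding phi_def by (simp add: algebra_simps)

lemma phi_self: "phi p1 p2 p3 p1 p2 p3 = Hs p1 p2 p3"
  unfolding phi_def Hs_def by (simp add: algebra_simps power2_eq_square)

lemma cs3: "((p1::real)*q1+p2*q2+p3*q3)^2 \<le> (p1^2+p2^2+p3^2)*(q1^2+q2^2+q3^2)"
proof -
  have "(p1^2+p2^2+p3^2)*(q1^2+q2^2+q3^2) - (p1*q1+p2*q2+p3*q3)^2
        = (p1*q2-p2*q1)^2 + (p2*q3-p3*q2)^2 + (p1*q3-p3*q1)^2"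
    by (simp add: algebra_simps power2_eq_square)
  moreover have "(p1*q2-p2*q1)^2 + (p2*q3-p3*q2)^2 + (p1*q3-p3*q1)^2 \<ge> 0" by simp
  ultimately show ?thesis by linarith
qed

lemma lor_neg:
  assumes "phi p1 p2 p3 p1 p2 p3 > 0" "phi p1 p2 p3 r1 r2 r3 = 0" "phi r1 r2 r3 r1 r2 r3 \<ge> 0"
  shows "r1 = 0 \<and> r2 = 0 \<and> r3 = 0"
proof (rule ccontr)
  assume nz: "\<not> ?thesis"
  define s where "s = p1+p2+p3"
  define t where "t = r1+r2+r3"
  define P2 where "P2 = p1^2+p2^2+p3^2"
  define R2 where "R2 = r1^2+r2^2+r3^2"
  define PR where "PR = p1*r1+p2*r2+p3*r3"
  have R2pos: "R2 > 0" using nz unfolding R2_def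
    by (metis add_nonneg_nonneg add_pos_nonneg add_nonneg_pos zero_le_power2 zero_less_power2)
  have a: "s^2 > 2*P2" using assms(1) unfolding s_def P2_def phi_alt by (simp add: power2_eq_square algebra_simps)
  have b: "s*t = 2*PR" using assms(2) unfolding s_def t_def PR_def phi_alt by simp
  have c: "t^2 \<ge> 2*R2" using assms(3) unfolding t_def R2_def phi_alt by (simp add: power2_eq_square algebra_simps)
  have d: "PR^2 \<le> P2*R2" unfolding PR_def P2_def R2_def by (rule cs3)
  have "s^2 * t^2 \<ge> s^2 * (2*R2)" using c by (simp add: mult_left_mono)
  moreover have "s^2 * (2*R2) > (2*P2)*(2*R2)" using a R2pos by simp
  ultimately have "(s*t)^2 > 4*(P2*R2)" by (simp add: power_mult_distrib algebra_simps)
  with b d show False by (simp add: power_mult_distrib)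
qed

lemma phi_pos:
  assumes "p1>0" "p2>0" "p3>0" "q1>0" "q2>0" "q3>0"
    "phi p1 p2 p3 p1 p2 p3 > 0" "phi q1 q2 q3 q1 q2 q3 > 0"
  shows "phi p1 p2 p3 q1 q2 q3 > 0"
proof -
  define s where "s = p1+p2+p3"
  define t where "t = q1+q2+q3"
  define P2 where "P2 = p1^2+p2^2+p3^2"
  define Q2 where "Q2 = q1^2+q2^2+q3^2"
  define PQ where "PQ = p1*q1+p2*q2+p3*q3"
  have a: "s^2 > 2*P2" using assms(7) unfolding s_def P2_def phi_alt by (simp add: power2_eq_square algebra_simps)
  have c: "t^2 > 2*Q2" using assms(8) unfolding t_def Q2_def phi_alt by (simp add: power2_eq_square algebra_simps)
  have d: "PQ^2 \<le> P2*Q2" unfolding PQ_def P2_def Q2_def by (rule cs3)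
  have P2: "P2 \<ge> 0" "Q2 \<ge> 0" unfolding P2_def Q2_def by simp_all
  have st: "s > 0" "t > 0" using assms unfolding s_def t_def by simp_all
  have "s^2*t^2 > (2*P2)*(2*Q2)" using a c P2
    by (smt (verit) mult_strict_mono zero_le_mult_iff)
  hence "(s*t)^2 > (2*PQ)^2" using d by (simp add: power_mult_distrib algebra_simps)
  hence "s*t > 2*PQ"
    by (smt (verit) st mult_pos_pos power2_le_imp_le)
  thus ?thesis unfolding phi_alt s_def t_def PQ_def by simp
qed

lemma pedoe:
  assumes pos: "p1>0" "p2>0" "p3>0" "q1>0" "q2>0" "q3>0"
    and a: "Hs p1 p2 p3 > 0" and b: "Hs q1 q2 q3 > 0"
  shows "phi p1 p2 p3 q1 q2 q3 / sqrt (Hs p1 p2 p3) \<ge> sqrt (Hs q1 q2 q3)"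
    and "phi p1 p2 p3 q1 q2 q3 / sqrt (Hs p1 p2 p3) = sqrt (Hs q1 q2 q3) \<Longrightarrow>
         \<exists>l>0. q1 = l*p1 \<and> q2 = l*p2 \<and> q3 = l*p3"
proof -
  define f where "f = phi p1 p2 p3 q1 q2 q3"
  define al where "al = Hs p1 p2 p3"
  define be where "be = Hs q1 q2 q3"
  have fpos: "f > 0" unfolding f_def using phi_pos[OF pos] a b by (simp add: phi_self)
  define r1 where "r1 = al*q1 - f*p1"
  define r2 where "r2 = al*q2 - f*p2"
  define r3 where "r3 = al*q3 - f*p3"
  have o: "phi p1 p2 p3 r1 r2 r3 = 0"
    unfolding r1_def r2_def r3_def al_def f_def phi_self[symmetric] by (simp add: phi_def algebra_simps)
  have rr: "phi r1 r2 r3 r1 r2 r3 = al*(al*be - f^2)"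
    unfolding r1_def r2_def r3_def be_def al_def f_def phi_self[symmetric]
    by (simp add: phi_def algebra_simps power2_eq_square)
  have key: "f^2 \<ge> al*be"
  proof (rule ccontr)
    assume "\<not> ?thesis"
    hence "phi r1 r2 r3 r1 r2 r3 > 0" using rr a al_def by simp
    hence "r1 = 0 \<and> r2 = 0 \<and> r3 = 0" using lor_neg[OF _ o] a by (simp add: phi_self)
    hence "phi r1 r2 r3 r1 r2 r3 = 0" by (simp add: phi_def)
    thus False using \<open>phi r1 r2 r3 r1 r2 r3 > 0\<close> by simp
  qed
  have sa: "sqrt al > 0" using a al_def by simp
  have "sqrt al * sqrt be \<le> f"
    using key fpos a b al_def be_def
    by (metis real_sqrt_le_mono real_sqrt_mult real_sqrt_abs abs_of_pos)
  thus "phi p1 p2 p3 q1 q2 q3 / sqrt (Hs p1 p2 p3) \<ge> sqrt (Hs q1 q2 q3)"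
    using sa unfolding f_def al_def be_def by (simp add: field_simps)
  assume "phi p1 p2 p3 q1 q2 q3 / sqrt (Hs p1 p2 p3) = sqrt (Hs q1 q2 q3)"
  hence "f = sqrt al * sqrt be" using sa unfolding f_def al_def be_def by (simp add: field_simps)
  hence "f^2 = al*be" using a b al_def be_def by (simp add: power_mult_distrib)
  hence "phi r1 r2 r3 r1 r2 r3 = 0" using rr by simp
  hence "r1 = 0 \<and> r2 = 0 \<and> r3 = 0" using lor_neg[OF _ o] a by (simp add: phi_self)
  hence "q1 = (f/al)*p1 \<and> q2 = (f/al)*p2 \<and> q3 = (f/al)*p3"
    using a al_def unfolding r1_def r2_def r3_def by (simp add: field_simps)
  moreover have "f/al > 0" using fpos a al_def by simp
  ultimately show "\<exists>l>0. q1 = l*p1 \<and> q2 = l*p2 \<and> q3 = l*p3" by blast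
qed

lemma Hs_tri:
  assumes "x>0" "y>0" "z>0" "x < y+z" "y < x+z" "z < x+y"
  shows "Hs (x^2) (y^2) (z^2) > 0"
proof -
  have "Hs (x^2) (y^2) (z^2) = (x+y+z)*(y+z-x)*(x+z-y)*(x+y-z)"
    by (simp add: Hs_def algebra_simps power2_eq_square power4_eq_xxxx)
  moreover have "(x+y+z)*(y+z-x)*(x+z-y)*(x+y-z) > 0" using assms by simp
  ultimately show ?thesis by simp
qed

lemma cot_arccos_tri:
  assumes "x>0" "y>0" "Hs (x^2) (y^2) (z^2) > 0"
  shows "cot (arccos ((x^2+y^2-z^2)/(2*x*y))) = (x^2+y^2-z^2)/sqrt (Hs (x^2) (y^2) (z^2))"
proof -
  define t where "t = (x^2+y^2-z^2)/(2*x*y)"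
  define h where "h = Hs (x^2) (y^2) (z^2)"
  have e: "1 - t^2 = h/(2*x*y)^2" unfolding t_def h_def Hs_def using assms
    by (simp add: field_simps power2_eq_square)
  have "1 - t^2 > 0" using e assms h_def by simp
  hence "\<bar>t\<bar> < 1" using abs_square_less_1[of t] by linarith
  hence t1: "-1 \<le> t" "t \<le> 1" by auto
  have "sqrt (1 - t^2) = sqrt h / (2*x*y)" using e assms
    by (simp add: real_sqrt_divide)
  hence "cot (arccos t) = t / (sqrt h / (2*x*y))"
    by (simp add: cot_def cos_arccos t1 sin_arccos)
  also have "\<dots> = (x^2+y^2-z^2)/sqrt h"
  proof -
    have "sqrt h > 0" using assms h_def by simp
    thus ?thesis unfolding t_def using assms by (simp add: field_simps)
  qed
  finally show ?thesis unfolding t_def h_def .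
qed



definition fsum :: "('a set \<Rightarrow> real) \<Rightarrow> ('a set \<Rightarrow> real) \<Rightarrow> 'a set \<Rightarrow> real" where
  "fsum d d' f = (\<Sum>i\<in>f. \<Sum>j\<in>f. if i \<noteq> j then cot (tri_angle d i j (the_elem (f - {i,j}))) * (d' {i,j})^2 else 0)"

lemma cot_tri:
  assumes "d {k,i} = u" "d {k,j} = v" "d {i,j} = w" "u > 0" "v > 0" "Hs (u^2) (v^2) (w^2) = H" "H > 0"
  shows "cot (tri_angle d i j k) = (u^2+v^2-w^2)/sqrt H"
  unfolding tri_angle_def using assms cot_arccos_tri[of u v w] by simp

lemma fsum_eq:
  assumes dist: "a \<noteq> b" "b \<noteq> c" "a \<noteq> c"
    and xyz: "d {b,c} = x" "d {a,c} = y" "d {a,b} = z" "x > 0" "y > 0" "z > 0"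
    and H: "Hs (x^2) (y^2) (z^2) > 0"
  shows "fsum d d' {a,b,c} = 2 * phi (x^2) (y^2) (z^2) (d' {b,c}^2) (d' {a,c}^2) (d' {a,b}^2) / sqrt (Hs (x^2) (y^2) (z^2))"
proof -
  define h where "h = Hs (x^2) (y^2) (z^2)"
  have hp: "h > 0" using H h_def by simp
  have s: "{a,b,c} - {a,b} = {c}" "{a,b,c} - {b,a} = {c}" "{a,b,c} - {a,c} = {b}" "{a,b,c} - {c,a} = {b}"
     "{a,b,c} - {b,c} = {a}" "{a,b,c} - {c,b} = {a}" using dist by auto
  have ce: "{c,a} = {a,c}" "{c,b} = {b,c}" "{b,a} = {a,b}" by auto
  have t1: "cot (tri_angle d a b c) = (y^2+x^2-z^2)/sqrt h"
    by (rule cot_tri[where u=y and v=x and w=z]) (use xyz hp ce in \<open>simp_all add: h_def Hs_def algebra_simps\<close>)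
  have t2: "cot (tri_angle d b a c) = (x^2+y^2-z^2)/sqrt h"
    by (rule cot_tri[where u=x and v=y and w=z]) (use xyz hp ce in \<open>simp_all add: h_def Hs_def algebra_simps\<close>)
  have t3: "cot (tri_angle d a c b) = (z^2+x^2-y^2)/sqrt h"
    by (rule cot_tri[where u=z and v=x and w=y]) (use xyz hp ce in \<open>simp_all add: h_def Hs_def algebra_simps\<close>)
  have t4: "cot (tri_angle d c a b) = (x^2+z^2-y^2)/sqrt h"
    by (rule cot_tri[where u=x and v=z and w=y]) (use xyz hp ce in \<open>simp_all add: h_def Hs_def algebra_simps\<close>)
  have t5: "cot (tri_angle d b c a) = (z^2+y^2-x^2)/sqrt h"
    by (rule cot_tri[where u=z and v=y and w=x]) (use xyz hp ce in \<open>simp_all add: h_def Hs_def algebra_simps\<close>)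
  have t6: "cot (tri_angle d c b a) = (y^2+z^2-x^2)/sqrt h"
    by (rule cot_tri[where u=y and v=z and w=x]) (use xyz hp ce in \<open>simp_all add: h_def Hs_def algebra_simps\<close>)
  have "fsum d d' {a,b,c} = cot (tri_angle d a b c) * (d' {a,b})^2 + cot (tri_angle d a c b) * (d' {a,c})^2
     + cot (tri_angle d b a c) * (d' {a,b})^2 + cot (tri_angle d b c a) * (d' {b,c})^2
     + cot (tri_angle d c a b) * (d' {a,c})^2 + cot (tri_angle d c b a) * (d' {b,c})^2"
    unfolding fsum_def using dist by (simp add: s ce)
  also have "\<dots> = 2 * phi (x^2) (y^2) (z^2) (d' {b,c}^2) (d' {a,c}^2) (d' {a,b}^2) / sqrt h"
  proof -
    have "sqrt h \<noteq> 0" using hp by simp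
    then obtain S where S: "S = sqrt h" "S \<noteq> 0" by blast
    show ?thesis unfolding t1 t2 t3 t4 t5 t6 phi_def S(1)[symmetric] using S(2)
      by (simp add: field_simps)
  qed
  finally show ?thesis unfolding h_def .
qed

lemma edge_in: "f \<in> F \<Longrightarrow> u \<in> f \<Longrightarrow> v \<in> f \<Longrightarrow> u \<noteq> v \<Longrightarrow> {u,v} \<in> edges F"
  unfolding edges_def by auto

lemma tri_data:
  assumes m: "euclidean_metric F d" and f: "{a,b,c} \<in> F" and dist: "a \<noteq> b" "b \<noteq> c" "a \<noteq> c"
  shows "d {b,c} > 0 \<and> d {a,c} > 0 \<and> d {a,b} > 0 \<and> Hs ((d {b,c})^2) ((d {a,c})^2) ((d {a,b})^2) > 0"
proof -
  have p: "d {b,c} > 0" "d {a,c} > 0" "d {a,b} > 0"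
    using m edge_in[OF f] dist unfolding euclidean_metric_def by auto
  have ce: "{c,a} = {a,c}" "{c,b} = {b,c}" "{b,a} = {a,b}" by auto
  have t: "\<forall>i\<in>{a,b,c}. \<forall>j\<in>{a,b,c}. \<forall>k\<in>{a,b,c}. i \<noteq> j \<and> j \<noteq> k \<and> i \<noteq> k \<longrightarrow>
        d {i, j} < d {i, k} + d {k, j}"
    using bspec[OF conjunct2[OF m[unfolded euclidean_metric_def]] f] .
  have "d {b,c} < d {b,a} + d {a,c}" using t[rule_format, of b c a] dist by simp
  moreover have "d {a,c} < d {a,b} + d {b,c}" using t[rule_format, of a c b] dist by simp
  moreover have "d {a,b} < d {a,c} + d {c,b}" using t[rule_format, of a b c] dist by simp
  ultimately have "Hs ((d {b,c})^2) ((d {a,c})^2) ((d {a,b})^2) > 0"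
    using p by (intro Hs_tri) (auto simp: ce)
  with p show ?thesis by simp
qed

lemma face_ineq:
  assumes m1: "euclidean_metric F d1" and m2: "euclidean_metric F d2" and f: "f \<in> F" "card f = 3"
  shows "fsum d2 d2 f \<le> fsum d1 d2 f"
    and "fsum d1 d2 f = fsum d2 d2 f \<Longrightarrow> \<exists>c>0. \<forall>e. e \<subseteq> f \<and> card e = 2 \<longrightarrow> d2 e = c * d1 e"
proof -
  obtain a b c where abc: "f = {a,b,c}" "a \<noteq> b" "b \<noteq> c" "a \<noteq> c" using f(2) card_3_iff by metis
  have D1: "d1 {b,c} > 0 \<and> d1 {a,c} > 0 \<and> d1 {a,b} > 0 \<and> Hs ((d1 {b,c})^2) ((d1 {a,c})^2) ((d1 {a,b})^2) > 0"
    using tri_data[OF m1] abc f by simp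
  have D2: "d2 {b,c} > 0 \<and> d2 {a,c} > 0 \<and> d2 {a,b} > 0 \<and> Hs ((d2 {b,c})^2) ((d2 {a,c})^2) ((d2 {a,b})^2) > 0"
    using tri_data[OF m2] abc f by simp
  have e1: "fsum d1 d2 f = 2 * (phi ((d1 {b,c})^2) ((d1 {a,c})^2) ((d1 {a,b})^2) ((d2 {b,c})^2) ((d2 {a,c})^2) ((d2 {a,b})^2) / sqrt (Hs ((d1 {b,c})^2) ((d1 {a,c})^2) ((d1 {a,b})^2)))"
    unfolding abc(1) using fsum_eq[OF abc(2-4), of d1] D1 by simp
  have e2: "fsum d2 d2 f = 2 * sqrt (Hs ((d2 {b,c})^2) ((d2 {a,c})^2) ((d2 {a,b})^2))"
  proof -
    have "fsum d2 d2 f = 2 * (Hs ((d2 {b,c})^2) ((d2 {a,c})^2) ((d2 {a,b})^2) / sqrt (Hs ((d2 {b,c})^2) ((d2 {a,c})^2) ((d2 {a,b})^2)))"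
      unfolding abc(1) using fsum_eq[OF abc(2-4), of d2] D2 by (simp add: phi_self)
    thus ?thesis using D2 by (simp add: real_div_sqrt)
  qed
  note P = pedoe[of "(d1 {b,c})^2" "(d1 {a,c})^2" "(d1 {a,b})^2" "(d2 {b,c})^2" "(d2 {a,c})^2" "(d2 {a,b})^2"]
  show "fsum d2 d2 f \<le> fsum d1 d2 f" unfolding e1 e2 using P(1) D1 D2 by simp
  assume "fsum d1 d2 f = fsum d2 d2 f"
  hence "\<exists>l>0. (d2 {b,c})^2 = l*(d1 {b,c})^2 \<and> (d2 {a,c})^2 = l*(d1 {a,c})^2 \<and> (d2 {a,b})^2 = l*(d1 {a,b})^2"
    unfolding e1 e2 using P(2) D1 D2 by simp
  then obtain l where l: "l > 0" "(d2 {b,c})^2 = l*(d1 {b,c})^2" "(d2 {a,c})^2 = l*(d1 {a,c})^2" "(d2 {a,b})^2 = l*(d1 {a,b})^2"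
    by blast
  have sq: "d2 e = sqrt l * d1 e" if "(d2 e)^2 = l*(d1 e)^2" "d2 e > 0" "d1 e > 0" for e
  proof -
    have "d2 e = sqrt ((d2 e)^2)" using that(2) by simp
    also have "\<dots> = sqrt (l * (d1 e)^2)" using that(1) by simp
    also have "\<dots> = sqrt l * d1 e" using that l(1) by (simp add: real_sqrt_mult)
    finally show ?thesis .
  qed
  have r: "d2 {b,c} = sqrt l * d1 {b,c}" "d2 {a,c} = sqrt l * d1 {a,c}" "d2 {a,b} = sqrt l * d1 {a,b}"
    using sq l D1 D2 by auto
  have "\<forall>e. e \<subseteq> f \<and> card e = 2 \<longrightarrow> d2 e = sqrt l * d1 e"
  proof (intro allI impI)
    fix e assume e: "e \<subseteq> f \<and> card e = 2"
    then obtain u v where uv: "e = {u,v}" "u \<noteq> v" using card_2_iff by metis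
    have "u \<in> {a,b,c}" "v \<in> {a,b,c}" using e uv abc by auto
    hence "e = {b,c} \<or> e = {a,c} \<or> e = {a,b}" using uv by auto
    thus "d2 e = sqrt l * d1 e" using r by auto
  qed
  thus "\<exists>c>0. \<forall>e. e \<subseteq> f \<and> card e = 2 \<longrightarrow> d2 e = c * d1 e" using l(1) by (intro exI[of _ "sqrt l"]) simp
qed



lemma st_facts:
  assumes "surface_triangulation V F"
  shows "finite V" "finite F" "\<And>f. f \<in> F \<Longrightarrow> card f = 3" "\<And>f. f \<in> F \<Longrightarrow> f \<subseteq> V" "V = \<Union>F"
proof -
  show fV: "finite V" using assms unfolding surface_triangulation_def by blast
  show "\<And>f. f \<in> F \<Longrightarrow> card f = 3" "\<And>f. f \<in> F \<Longrightarrow> f \<subseteq> V" "V = \<Union>F"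
    using assms unfolding surface_triangulation_def by blast+
  hence "F \<subseteq> Pow V" by blast
  thus "finite F" using fV finite_subset by blast
qed

lemma edge_face: "{i,j} \<in> edges F \<Longrightarrow> i \<noteq> j \<and> (\<exists>f\<in>F. {i,j} \<subseteq> f)"
  unfolding edges_def by (auto simp: card_2_iff)

definition W :: "'a set \<Rightarrow> 'a set set \<Rightarrow> ('a set \<Rightarrow> real) \<Rightarrow> ('a set \<Rightarrow> real) \<Rightarrow> real" where
  "W V F d d' = (\<Sum>i\<in>V. \<Sum>j\<in>V. if i \<noteq> j then cot_weight F d i j * (d' {i,j})^2 else 0)"

lemma W_eq:
  assumes st: "surface_triangulation V F"
  shows "W V F d d' = (\<Sum>f\<in>F. fsum d d' f) / 2"
proof -
  note S = st_facts[OF st]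
  define G where "G i j f = (if i \<noteq> j \<and> {i,j} \<subseteq> f then cot (tri_angle d i j (the_elem (f - {i,j}))) * (d' {i,j})^2 else 0)" for i j f
  have step1: "(if i \<noteq> j then cot_weight F d i j * (d' {i,j})^2 else 0) = (\<Sum>f\<in>F. G i j f) / 2" for i j
  proof (cases "i \<noteq> j \<and> {i,j} \<in> edges F")
    case True
    have "cot_weight F d i j * (d' {i,j})^2 =
       (\<Sum>f\<in>{f\<in>F. {i,j} \<subseteq> f}. cot (tri_angle d i j (the_elem (f - {i, j})))) * (d' {i,j})^2 / 2"
      unfolding cot_weight_def using True by simp
    also have "\<dots> = (\<Sum>f\<in>{f\<in>F. {i,j} \<subseteq> f}. cot (tri_angle d i j (the_elem (f - {i, j}))) * (d' {i,j})^2) / 2"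
      by (simp add: sum_distrib_right)
    also have "\<dots> = (\<Sum>f\<in>F. G i j f) / 2"
      unfolding G_def using True S(2) by (simp add: sum.inter_filter)
    finally show ?thesis using True by simp
  next
    case False
    have "G i j f = 0" if "f \<in> F" for f
    proof (cases "i \<noteq> j \<and> {i,j} \<subseteq> f")
      case True
      hence "{i,j} \<in> edges F" using edge_in[OF that] by auto
      thus ?thesis using False True by auto
    qed (auto simp: G_def)
    hence "(\<Sum>f\<in>F. G i j f) = 0" by simp
    moreover have "(if i \<noteq> j then cot_weight F d i j * (d' {i,j})^2 else 0) = 0"
      using False by (auto simp: cot_weight_def)
    ultimately show ?thesis by simp
  qed
  have "W V F d d' = (\<Sum>i\<in>V. \<Sum>j\<in>V. (\<Sum>f\<in>F. G i j f) / 2)"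
    unfolding W_def by (intro sum.cong refl step1)
  also have "\<dots> = (\<Sum>i\<in>V. \<Sum>j\<in>V. \<Sum>f\<in>F. G i j f) / 2"
    by (simp add: sum_divide_distrib)
  also have "(\<Sum>i\<in>V. \<Sum>j\<in>V. \<Sum>f\<in>F. G i j f) = (\<Sum>f\<in>F. \<Sum>i\<in>V. \<Sum>j\<in>V. G i j f)"
    by (simp add: sum.swap[of _ V F] sum.swap[of _ V F])
  also have "\<dots> = (\<Sum>f\<in>F. fsum d d' f)"
  proof (rule sum.cong[OF refl])
    fix f assume f: "f \<in> F"
    have fV: "f \<subseteq> V" using S(4) f .
    have "(\<Sum>i\<in>V. \<Sum>j\<in>V. G i j f) = (\<Sum>i\<in>f. \<Sum>j\<in>f. if i \<noteq> j then cot (tri_angle d i j (the_elem (f - {i,j}))) * (d' {i,j})^2 else 0)"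
    proof (rule sum.mono_neutral_cong_right[OF S(1) fV])
      show "\<forall>i\<in>V - f. (\<Sum>j\<in>V. G i j f) = 0" by (auto simp: G_def)
      fix i assume i: "i \<in> f"
      show "(\<Sum>j\<in>V. G i j f) = (\<Sum>j\<in>f. if i \<noteq> j then cot (tri_angle d i j (the_elem (f - {i,j}))) * (d' {i,j})^2 else 0)"
        by (rule sum.mono_neutral_cong_right[OF S(1) fV]) (auto simp: G_def i)
    qed
    thus "(\<Sum>i\<in>V. \<Sum>j\<in>V. G i j f) = fsum d d' f" unfolding fsum_def .
  qed
  finally show ?thesis .
qed



lemma scale_ratio: "(c::real) \<noteq> 0 \<Longrightarrow> ((c*x)^2 + (c*y)^2 - (c*z)^2)/(2*(c*x)*(c*y)) = (x^2+y^2-z^2)/(2*x*y)"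
proof -
  assume c: "c \<noteq> 0"
  have "((c*x)^2 + (c*y)^2 - (c*z)^2)/(2*(c*x)*(c*y)) = (c^2*(x^2+y^2-z^2))/(c^2*(2*x*y))"
    by (simp add: power_mult_distrib algebra_simps power2_eq_square)
  also have "\<dots> = (x^2+y^2-z^2)/(2*x*y)" using c by simp
  finally show ?thesis .
qed

lemma backward:
  assumes st: "surface_triangulation V F" and c: "c > 0" and sc: "\<forall>e\<in>edges F. d2 e = c * d1 e"
  shows "cot_weight F d1 i j = cot_weight F d2 i j"
proof (cases "{i,j} \<in> edges F")
  case True
  have ij: "i \<noteq> j" using edge_face[OF True] by simp
  have "tri_angle d1 i j (the_elem (f - {i,j})) = tri_angle d2 i j (the_elem (f - {i,j}))"
    if f: "f \<in> {f\<in>F. {i,j} \<subseteq> f}" for f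
  proof -
    have c3: "card f = 3" using st_facts(3)[OF st] f by simp
    have sub: "{i,j} \<subseteq> f" using f by simp
    have "card (f - {i,j}) = card f - card {i,j}" using sub by (intro card_Diff_subset) auto
    hence "card (f - {i,j}) = 1" using c3 ij by simp
    then obtain k where k: "f - {i,j} = {k}" using card_1_singletonE by blast
    hence kk: "k \<in> f" "k \<noteq> i" "k \<noteq> j" by auto
    have fF: "f \<in> F" "i \<in> f" "j \<in> f" using f by auto
    have e: "d2 {k,i} = c * d1 {k,i}" "d2 {k,j} = c * d1 {k,j}" "d2 {i,j} = c * d1 {i,j}"
    proof -
      have "{k,i} \<in> edges F" "{k,j} \<in> edges F" "{i,j} \<in> edges F"
        using edge_in[OF fF(1)] kk fF ij by metis+
      thus "d2 {k,i} = c * d1 {k,i}" "d2 {k,j} = c * d1 {k,j}" "d2 {i,j} = c * d1 {i,j}"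
        using sc by simp_all
    qed
    have cn: "c \<noteq> 0" using c by simp
    show ?thesis unfolding k tri_angle_def the_elem_eq e scale_ratio[OF cn] ..
  qed
  note teq = this
  have "(\<Sum>f\<in>{f\<in>F. {i,j} \<subseteq> f}. cot (tri_angle d1 i j (the_elem (f - {i,j}))))
      = (\<Sum>f\<in>{f\<in>F. {i,j} \<subseteq> f}. cot (tri_angle d2 i j (the_elem (f - {i,j}))))"
    by (rule sum.cong[OF refl]) (simp only: teq)
  thus ?thesis unfolding cot_weight_def using True by simp
next
  case False
  thus ?thesis unfolding cot_weight_def by simp
qed

lemma face_scale:
  assumes st: "surface_triangulation V F" and m1: "euclidean_metric F d1" and m2: "euclidean_metric F d2"
    and eq: "\<forall>i\<in>V. \<forall>j\<in>V. i \<noteq> j \<longrightarrow> cot_weight F d1 i j = cot_weight F d2 i j"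
    and f: "f \<in> F"
  shows "\<exists>c>0. \<forall>e. e \<subseteq> f \<and> card e = 2 \<longrightarrow> d2 e = c * d1 e"
proof -
  note S = st_facts[OF st]
  have "W V F d1 d2 = W V F d2 d2" unfolding W_def using eq by (intro sum.cong refl) auto
  hence "(\<Sum>f\<in>F. fsum d1 d2 f) = (\<Sum>f\<in>F. fsum d2 d2 f)" using W_eq[OF st] by simp
  hence "(\<Sum>f\<in>F. fsum d1 d2 f - fsum d2 d2 f) = 0" by (simp add: sum_subtractf)
  moreover have nn: "\<And>g. g \<in> F \<Longrightarrow> 0 \<le> fsum d1 d2 g - fsum d2 d2 g"
    using face_ineq(1)[OF m1 m2] S(3) by simp
  have iff: "(\<Sum>f\<in>F. fsum d1 d2 f - fsum d2 d2 f) = 0 \<longleftrightarrow> (\<forall>g\<in>F. fsum d1 d2 g - fsum d2 d2 g = 0)"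
    by (rule sum_nonneg_eq_0_iff[OF S(2)]) (rule nn)
  ultimately have "\<forall>g\<in>F. fsum d1 d2 g - fsum d2 d2 g = 0" by simp
  hence "fsum d1 d2 f = fsum d2 d2 f" using f by simp
  thus ?thesis using face_ineq(2)[OF m1 m2 f S(3)[OF f]] by blast
qed



lemma glue:
  assumes st: "surface_triangulation V F" and m1: "euclidean_metric F d1"
    and cf: "\<forall>f\<in>F. cf f > 0 \<and> (\<forall>e. e \<subseteq> f \<and> card e = 2 \<longrightarrow> d2 e = cf f * d1 e)"
    and f0: "f0 \<in> F"
  shows "\<forall>g\<in>F. cf g = cf f0"
proof -
  note S = st_facts[OF st]
  have share: "cf f = cf g" if "f \<in> F" "g \<in> F" "u \<in> f" "v \<in> f" "u \<in> g" "v \<in> g" "u \<noteq> v" for f g u v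
  proof -
    have e: "{u,v} \<in> edges F" using edge_in[OF that(1,3,4,7)] .
    have pos: "d1 {u,v} > 0" using m1 e unfolding euclidean_metric_def by blast
    have c2: "card {u,v} = 2" using that(7) by simp
    have "d2 {u,v} = cf f * d1 {u,v}" using cf that(1,3,4) c2 by auto
    moreover have "d2 {u,v} = cf g * d1 {u,v}" using cf that(2,5,6) c2 by auto
    ultimately show ?thesis using pos by simp
  qed
  have other: "\<exists>u\<in>f. u \<noteq> v" if "f \<in> F" for f v
  proof -
    have "card f = 3" using S(3) that by simp
    have "\<not> f \<subseteq> {v}"
    proof
      assume "f \<subseteq> {v}"
      hence "card f \<le> card {v}" by (intro card_mono) simp_all
      thus False using \<open>card f = 3\<close> by simp
    qed
    thus ?thesis by blast
  qed
  have vertex: "cf f = cf g" if fg: "f \<in> F" "g \<in> F" "v \<in> f" "v \<in> g" for f g v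
  proof -
    obtain u where u: "u \<in> f" "u \<noteq> v" using other[OF fg(1)] by blast
    obtain w where w: "w \<in> g" "w \<noteq> v" using other[OF fg(2)] by blast
    have vV: "v \<in> V" using S(5) fg by blast
    have "f - {v} \<in> link_edges F v" unfolding link_edges_def using fg by blast
    hence uL: "u \<in> link_vertices F v" unfolding link_vertices_def using u by blast
    have "g - {v} \<in> link_edges F v" unfolding link_edges_def using fg by blast
    hence wL: "w \<in> link_vertices F v" unfolding link_vertices_def using w by blast
    have conn: "\<forall>v\<in>V. \<forall>u\<in>link_vertices F v. \<forall>w\<in>link_vertices F v.
        (u, w) \<in> {(x, y). {x, y} \<in> link_edges F v}\<^sup>*"
      using st unfolding surface_triangulation_def by (elim conjE) assumption
    have path: "(u, w) \<in> {(x, y). {x, y} \<in> link_edges F v}\<^sup>*" using conn[rule_format, OF vV uL wL] .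
    have "y \<noteq> v \<and> (\<forall>h\<in>F. v \<in> h \<and> y \<in> h \<longrightarrow> cf h = cf f)"
      if "(u, y) \<in> {(x, y). {x, y} \<in> link_edges F v}\<^sup>*" for y
      using that
    proof (induction rule: rtrancl_induct)
      case base
      have "cf h = cf f" if "h \<in> F" "v \<in> h" "u \<in> h" for h
        using share[OF that(1) fg(1) that(3) that(2) u(1) fg(3) u(2)] .
      then show ?case using u(2) by blast
    next
      case (step x y)
      then obtain h0 where h0: "{x,y} = h0 - {v}" "h0 \<in> F" "v \<in> h0" unfolding link_edges_def by blast
      have xy: "x \<in> h0" "y \<in> h0" "y \<noteq> v" using h0(1) by blast+
      have "cf h0 = cf f" using step.IH h0 xy by blast
      moreover have "cf h = cf h0" if "h \<in> F" "v \<in> h" "y \<in> h" for h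
        using share[OF that(1) h0(2) that(2,3) h0(3) xy(2)] xy(3) by simp
      ultimately show ?case using xy(3) by auto
    qed
    from this[OF path] w fg show ?thesis by auto
  qed
  obtain v0 where v0: "v0 \<in> f0" using other[OF f0] by blast
  show ?thesis
  proof
    fix g assume g: "g \<in> F"
    obtain w where w: "w \<in> g" using other[OF g] by blast
    have conn: "\<forall>u\<in>V. \<forall>w\<in>V. (u, w) \<in> {(x, y). {x, y} \<in> edges F}\<^sup>*"
      using st unfolding surface_triangulation_def by (elim conjE) assumption
    have "v0 \<in> V" "w \<in> V" using S(5) v0 w f0 g by blast+
    hence path: "(v0, w) \<in> {(x, y). {x, y} \<in> edges F}\<^sup>*" using conn[rule_format] by blast
    have "\<forall>h\<in>F. y \<in> h \<longrightarrow> cf h = cf f0" if "(v0, y) \<in> {(x, y). {x, y} \<in> edges F}\<^sup>*" for y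
      using that
    proof (induction rule: rtrancl_induct)
      case base
      then show ?case using vertex v0 f0 by blast
    next
      case (step x y)
      hence exy: "{x,y} \<in> edges F" by simp
      obtain h0 where h0: "h0 \<in> F" "{x,y} \<subseteq> h0" using edge_face[OF exy] by blast
      have "cf h0 = cf f0" using step.IH h0 by blast
      thus ?case using vertex[OF _ h0(1), of _ y] h0(2) by auto
    qed
    from this[OF path] g w show "cf g = cf f0" by blast
  qed
qed


theorem mainTheorem1:
  fixes V :: "'a set" and F :: "'a set set" and d1 d2 :: "'a set \<Rightarrow> real"
  assumes "surface_triangulation V F"
    and "euclidean_metric F d1" and "euclidean_metric F d2"
  shows "(\<forall>i\<in>V. \<forall>j\<in>V. laplace V F d1 i j = laplace V F d2 i j) \<longleftrightarrow>
         (\<exists>c>0. \<forall>e\<in>edges F. d2 e = c * d1 e)"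
proof
  note st = assms(1) and m1 = assms(2) and m2 = assms(3)
  assume L: "\<forall>i\<in>V. \<forall>j\<in>V. laplace V F d1 i j = laplace V F d2 i j"
  have eq: "\<forall>i\<in>V. \<forall>j\<in>V. i \<noteq> j \<longrightarrow> cot_weight F d1 i j = cot_weight F d2 i j"
  proof (intro ballI impI)
    fix i j assume ij: "i \<in> V" "j \<in> V" "i \<noteq> j"
    have "laplace V F d1 i j = laplace V F d2 i j" using L ij by blast
    thus "cot_weight F d1 i j = cot_weight F d2 i j" using ij(3) unfolding laplace_def by simp
  qed
  have "\<forall>f\<in>F. \<exists>c>0. \<forall>e. e \<subseteq> f \<and> card e = 2 \<longrightarrow> d2 e = c * d1 e"
    using face_scale[OF st m1 m2 eq] by blast
  then obtain cf where cf: "\<forall>f\<in>F. cf f > 0 \<and> (\<forall>e. e \<subseteq> f \<and> card e = 2 \<longrightarrow> d2 e = cf f * d1 e)"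
    by metis
  have "F \<noteq> {}" using st unfolding surface_triangulation_def by blast
  then obtain f0 where f0: "f0 \<in> F" by blast
  have all: "\<forall>g\<in>F. cf g = cf f0" using glue[OF st m1 cf f0] .
  have "\<forall>e\<in>edges F. d2 e = cf f0 * d1 e"
  proof
    fix e assume e: "e \<in> edges F"
    then obtain g where g: "g \<in> F" "e \<subseteq> g" "card e = 2" unfolding edges_def by blast
    thus "d2 e = cf f0 * d1 e" using cf all by metis
  qed
  moreover have "cf f0 > 0" using cf f0 by blast
  ultimately show "\<exists>c>0. \<forall>e\<in>edges F. d2 e = c * d1 e" by blast
next
  assume "\<exists>c>0. \<forall>e\<in>edges F. d2 e = c * d1 e"
  then obtain c where c: "c > 0" "\<forall>e\<in>edges F. d2 e = c * d1 e" by blast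
  have w: "cot_weight F d1 i j = cot_weight F d2 i j" for i j
    using backward[OF assms(1) c] .
  show "\<forall>i\<in>V. \<forall>j\<in>V. laplace V F d1 i j = laplace V F d2 i j"
    unfolding laplace_def w by simp
qed

end
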